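(* Let $\mathcal C$ be a nondegenerate conic section in the (complex or real) projective plane, equipped with a rational parametrization, i.e. a birational bijection $\mathbb{P}^1\to\mathcal C$; for a point of $\mathcal C$ denoted by a capital letter, the corresponding lowercase letter denotes its parameter value. (1) Let the broken lines $X_1X_2X_3X_4$ and $Y_1Y_2Y_3Y_4$ be inscribed in $\mathcal C$. Then the intersection points $A_j=X_jX_{j+1}\cap Y_jY_{j+1}$, $j=1,2,3$, are collinear if and only if \[ (x_1,y_2,x_3,y_4)=(y_1,x_2,y_3,x_4). \] (2) Let the broken lines $Y_2Y_1UX_1X_2$ and $PVQ$ be inscribed in $\mathcal C$. Then the points \[ A=X_1X_2\cap Y_1Y_2,\quad B=UX_1\cap PV,\quad C=UY_1\cap QV \] are collinear if and only if \[ (p,u,q,x_2,y_1,v,x_1,y_2)=1. \]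
   Context: The cross-ratio is $(a,b,c,d)=\frac{a-b}{b-c}\cdot\frac{c-d}{d-a}$. More generally, the multi-ratio of an even number of arguments is $(a_1,a_2,\dots,a_{2k})=\prod_{i=1}^{k}\frac{a_{2i-1}-a_{2i}}{a_{2i}-a_{2i+1}}$ with $a_{2k+1}=a_1$, i.e. $(a,b,\dots,c,d)=\frac{a-b}{b-\cdots}\cdots\frac{c-d}{d-a}$. $PQ$ denotes the line through $P$ and $Q$; the points are assumed to be in general position so that all lines and intersections are defined. *)

theory Defs
  imports Main
begin

text \<open>Points of the projective plane over a field are represented by homogeneous
coordinate triples; a triple different from (0,0,0) represents a point, and proportional
triples represent the same point.\<close>

type_synonym 'a hpt = "'a \<times> 'a \<times> 'a"

fun det3 :: "'a::comm_ring_1 hpt \<Rightarrow> 'a hpt \<Rightarrow> 'a hpt \<Rightarrow> 'a" where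
  "det3 (a1, a2, a3) (b1, b2, b3) (c1, c2, c3) =
     a1 * (b2 * c3 - b3 * c2) - a2 * (b1 * c3 - b3 * c1) + a3 * (b1 * c2 - b2 * c1)"

definition proj_collinear :: "'a::comm_ring_1 hpt \<Rightarrow> 'a hpt \<Rightarrow> 'a hpt \<Rightarrow> bool" where
  "proj_collinear P Q R \<longleftrightarrow> det3 P Q R = 0"

definition is_meet :: "'a::comm_ring_1 hpt \<Rightarrow> 'a hpt \<Rightarrow> 'a hpt \<Rightarrow> 'a hpt \<Rightarrow> 'a hpt \<Rightarrow> bool" where
  "is_meet A P Q R S \<longleftrightarrow> A \<noteq> (0, 0, 0) \<and> proj_collinear A P Q \<and> proj_collinear A R S"

text \<open>The map t \<mapsto> c0 + t c1 + t^2 c2 (affine chart of the parameter line).\<close>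
fun conic_pt :: "'a::comm_ring_1 hpt \<Rightarrow> 'a hpt \<Rightarrow> 'a hpt \<Rightarrow> 'a \<Rightarrow> 'a hpt" where
  "conic_pt (a0, b0, d0) (a1, b1, d1) (a2, b2, d2) t =
     (a0 + a1 * t + a2 * t ^ 2, b0 + b1 * t + b2 * t ^ 2, d0 + d1 * t + d2 * t ^ 2)"

text \<open>phi is a rational (birational) parametrization of a nondegenerate conic:
its three coordinate polynomials have degree at most 2 and are linearly independent.\<close>
definition conic_param :: "('a::comm_ring_1 \<Rightarrow> 'a hpt) \<Rightarrow> bool" where
  "conic_param phi \<longleftrightarrow> (\<exists>c0 c1 c2. det3 c0 c1 c2 \<noteq> 0 \<and> phi = conic_pt c0 c1 c2)"

definition mratio :: "'a::field list \<Rightarrow> 'a" where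
  "mratio xs = (\<Prod>i<length xs div 2.
      (xs ! (2 * i) - xs ! (2 * i + 1)) / (xs ! (2 * i + 1) - xs ! ((2 * i + 2) mod length xs)))"

end

theory Submission
  imports Defs
begin

fun crs :: "'a::comm_ring_1 hpt \<Rightarrow> 'a hpt \<Rightarrow> 'a hpt" where
  "crs (u0,u1,u2) (v0,v1,v2) = (u1*v2-u2*v1, u2*v0-u0*v2, u0*v1-u1*v0)"

fun dt :: "'a::comm_ring_1 hpt \<Rightarrow> 'a hpt \<Rightarrow> 'a" where
  "dt (u0,u1,u2) (v0,v1,v2) = u0*v0+u1*v1+u2*v2"

fun sc :: "'a::comm_ring_1 \<Rightarrow> 'a hpt \<Rightarrow> 'a hpt" where
  "sc k (u0,u1,u2) = (k*u0,k*u1,k*u2)"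

fun Mv :: "'a::comm_ring_1 hpt \<Rightarrow> 'a hpt \<Rightarrow> 'a hpt \<Rightarrow> 'a hpt \<Rightarrow> 'a hpt" where
  "Mv (a0,b0,d0) (a1,b1,d1) (a2,b2,d2) (u0,u1,u2) =
     (u0*a0+u1*a1+u2*a2, u0*b0+u1*b1+u2*b2, u0*d0+u1*d1+u2*d2)"

definition Nv :: "'a::comm_ring_1 hpt \<Rightarrow> 'a hpt \<Rightarrow> 'a hpt \<Rightarrow> 'a hpt \<Rightarrow> 'a hpt" where
  "Nv c0 c1 c2 w = Mv (crs c1 c2) (crs c2 c0) (crs c0 c1) w"

definition ln :: "'a::comm_ring_1 \<Rightarrow> 'a \<Rightarrow> 'a hpt" where
  "ln a b = (a*b, -(a+b), 1)"

definition ww :: "'a::comm_ring_1 \<Rightarrow> 'a \<Rightarrow> 'a \<Rightarrow> 'a \<Rightarrow> 'a hpt" where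
  "ww a b c d = crs (ln a b) (ln c d)"

lemma det3_dt: "det3 P Q R = dt P (crs Q R)"
  by (cases P; cases Q; cases R) (simp add: algebra_simps)

lemma conic_Mv: "conic_pt c0 c1 c2 t = Mv c0 c1 c2 (1, t, t^2)"
  by (cases c0; cases c1; cases c2) (simp add: algebra_simps)

lemma crs_Mv: "crs (Mv c0 c1 c2 u) (Mv c0 c1 c2 v) = Nv c0 c1 c2 (crs u v)"
  unfolding Nv_def
  by (cases c0; cases c1; cases c2; cases u; cases v) (simp add: algebra_simps)

lemma crs_Nv: "crs (Nv c0 c1 c2 u) (Nv c0 c1 c2 v) = sc (det3 c0 c1 c2) (Mv c0 c1 c2 (crs u v))"
  unfolding Nv_def
  by (cases c0; cases c1; cases c2; cases u; cases v) (simp add: algebra_simps)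

lemma det3_Mv: "det3 (Mv c0 c1 c2 u) (Mv c0 c1 c2 v) (Mv c0 c1 c2 w) = det3 c0 c1 c2 * det3 u v w"
  by (cases c0; cases c1; cases c2; cases u; cases v; cases w) (simp add: algebra_simps)

lemma crs_v: "crs (1, a, a^2) (1, b, b^2) = sc (b - a) (ln a b)"
  unfolding ln_def by (simp add: algebra_simps power2_eq_square)

lemma dt_sc: "dt A (sc k u) = k * dt A u"
  by (cases A; cases u) (simp add: algebra_simps)

lemma det3_sc: "det3 (sc a u) (sc b v) (sc c w) = a*b*c * det3 u v w"
  by (cases u; cases v; cases w) (simp add: algebra_simps)

lemma Mv_nz:
  fixes c0 :: "'a::field hpt"
  assumes "det3 c0 c1 c2 \<noteq> 0" "w \<noteq> (0,0,0)"
  shows "Mv c0 c1 c2 w \<noteq> (0,0,0)"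
proof
  assume h: "Mv c0 c1 c2 w = (0,0,0)"
  obtain w0 w1 w2 where w: "w = (w0,w1,w2)" by (cases w) auto
  have "dt (crs c1 c2) (Mv c0 c1 c2 w) = w0 * det3 c0 c1 c2"
       "dt (crs c2 c0) (Mv c0 c1 c2 w) = w1 * det3 c0 c1 c2"
       "dt (crs c0 c1) (Mv c0 c1 c2 w) = w2 * det3 c0 c1 c2"
    unfolding w by (cases c0; cases c1; cases c2; simp add: algebra_simps)+
  with h have "w0 = 0" "w1 = 0" "w2 = 0" using assms(1)
    by (cases c0; cases c1; cases c2; simp)+
  with w assms(2) show False by simp
qed

lemma parallel:
  fixes A :: "'a::field hpt"
  assumes "A \<noteq> (0,0,0)" "dt A n1 = 0" "dt A n2 = 0" "crs n1 n2 \<noteq> (0,0,0)"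
  shows "\<exists>k. k \<noteq> 0 \<and> A = sc k (crs n1 n2)"
proof -
  obtain w0 w1 w2 where w: "crs n1 n2 = (w0,w1,w2)" by (cases "crs n1 n2") auto
  obtain a0 a1 a2 where a: "A = (a0,a1,a2)" by (cases A) auto
  obtain p0 p1 p2 where n1: "n1 = (p0,p1,p2)" by (cases n1) auto
  obtain q0 q1 q2 where n2: "n2 = (q0,q1,q2)" by (cases n2) auto
  have h2: "a0*p0+a1*p1+a2*p2 = 0" "a0*q0+a1*q1+a2*q2 = 0"
    using assms(2,3) unfolding a n1 n2 by auto
  have "crs A (crs n1 n2) = (p0 * (a0*q0+a1*q1+a2*q2) - q0 * (a0*p0+a1*p1+a2*p2),
      p1 * (a0*q0+a1*q1+a2*q2) - q1 * (a0*p0+a1*p1+a2*p2),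
      p2 * (a0*q0+a1*q1+a2*q2) - q2 * (a0*p0+a1*p1+a2*p2))"
    unfolding a n1 n2 by (simp add: algebra_simps)
  hence "crs A (crs n1 n2) = (0,0,0)" using h2 by simp
  hence e: "a1*w2 - a2*w1 = 0" "a2*w0 - a0*w2 = 0" "a0*w1-a1*w0 = 0" unfolding w a by auto
  have nz: "w0 \<noteq> 0 \<or> w1 \<noteq> 0 \<or> w2 \<noteq> 0" using assms(4) w by auto
  have anz: "a0 \<noteq> 0 \<or> a1 \<noteq> 0 \<or> a2 \<noteq> 0" using assms(1) a by auto
  show ?thesis
  proof (cases "w0 \<noteq> 0")
    case True
    show ?thesis
      apply (rule exI[of _ "a0/w0"])
      using True e anz unfolding w a
      by (auto simp: field_simps)
  next
    case F0: False
    show ?thesis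
    proof (cases "w1 \<noteq> 0")
      case True
      show ?thesis
        apply (rule exI[of _ "a1/w1"])
        using True F0 e anz unfolding w a
        by (auto simp: field_simps)
    next
      case False
      with F0 nz have W: "w2 \<noteq> 0" by auto
      show ?thesis
        apply (rule exI[of _ "a2/w2"])
        using W False F0 e anz unfolding w a
        by (auto simp: field_simps)
    qed
  qed
qed


lemma Nv_sc: "Nv c0 c1 c2 (sc k u) = sc k (Nv c0 c1 c2 u)"
  unfolding Nv_def
  by (cases c0; cases c1; cases c2; cases u) (simp add: algebra_simps)

lemma sc_sc: "sc a (sc b u) = sc (a*b) u"
  by (cases u) (simp add: algebra_simps)

lemma sc_nz:
  fixes k :: "'a::field"
  shows "k \<noteq> 0 \<Longrightarrow> u \<noteq> (0,0,0) \<Longrightarrow> sc k u \<noteq> (0,0,0)"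
  by (cases u) auto

lemma ww_nz:
  fixes a :: "'a::field"
  assumes "a \<noteq> c" "a \<noteq> d"
  shows "ww a b c d \<noteq> (0,0,0)"
proof
  assume h: "ww a b c d = (0,0,0)"
  hence e: "(c+d) - (a+b) = 0" "c*d - a*b = 0" unfolding ww_def ln_def by (auto simp: algebra_simps)
  have "(a-c)*(a-d) = a*((c+d) - (a+b)) * (-1) + (c*d - a*b)" by (simp add: algebra_simps)
  also have "\<dots> = 0" using e by simp
  finally show False using assms by simp
qed

lemma meet:
  fixes c0 :: "'a::field hpt"
  assumes dM: "det3 c0 c1 c2 \<noteq> 0"
    and m: "is_meet A (conic_pt c0 c1 c2 a) (conic_pt c0 c1 c2 b) (conic_pt c0 c1 c2 c) (conic_pt c0 c1 c2 d)"
    and "a \<noteq> b" "c \<noteq> d" "a \<noteq> c" "a \<noteq> d"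
  shows "\<exists>k. k \<noteq> 0 \<and> A = sc k (Mv c0 c1 c2 (ww a b c d))"
proof -
  have key: "det3 A (conic_pt c0 c1 c2 a) (conic_pt c0 c1 c2 b) = (b - a) * dt A (Nv c0 c1 c2 (ln a b))"
    for a b unfolding det3_dt conic_Mv crs_Mv crs_v Nv_sc dt_sc ..
  have A0: "A \<noteq> (0,0,0)" and h1: "dt A (Nv c0 c1 c2 (ln a b)) = 0" and h2: "dt A (Nv c0 c1 c2 (ln c d)) = 0"
    using m assms(3-) unfolding is_meet_def proj_collinear_def key by auto
  have cr: "crs (Nv c0 c1 c2 (ln a b)) (Nv c0 c1 c2 (ln c d)) = sc (det3 c0 c1 c2) (Mv c0 c1 c2 (ww a b c d))"
    unfolding crs_Nv ww_def ..
  have nz: "crs (Nv c0 c1 c2 (ln a b)) (Nv c0 c1 c2 (ln c d)) \<noteq> (0,0,0)"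
    unfolding cr using dM ww_nz[OF assms(5,6)] Mv_nz sc_nz by metis
  obtain k where "k \<noteq> 0" "A = sc k (crs (Nv c0 c1 c2 (ln a b)) (Nv c0 c1 c2 (ln c d)))"
    using parallel[OF A0 h1 h2 nz] by blast
  thus ?thesis unfolding cr sc_sc using dM by (intro exI[of _ "k * det3 c0 c1 c2"]) auto
qed

lemma ww_eq: "ww a b c d = (c+d-a-b, c*d-a*b, (a+b)*(c*d)-a*b*(c+d))"
  unfolding ww_def ln_def by simp (simp add: algebra_simps)

lemma D1: "det3 (ww x1 x2 y1 y2) (ww x2 x3 y2 y3) (ww x3 x4 y3 y4) =
  - ((x2-y2)*(x3-y3)*((x1-y2)*(x3-y4)*(x2-y3)*(x4-y1)-(y1-x2)*(y3-x4)*(y2-x3)*(y4-x1)))"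
  unfolding ww_eq by simp (simp add: algebra_simps)

lemma D2: "det3 (ww x1 x2 y1 y2) (ww u x1 p v) (ww u y1 q v) =
  (x1-y1)*(u-v)*((p-u)*(q-x2)*(y1-v)*(x1-y2)-(u-q)*(x2-y1)*(v-x1)*(y2-p))"
  unfolding ww_eq by simp (simp add: algebra_simps)


lemma mr4: "mratio [a,b,c,d] = (a-b)/(b-c) * ((c-d)/(d-a))"
proof -
  have l: "length [a,b,c,d] = 4" "(4::nat) div 2 = 2" by simp_all
  show ?thesis unfolding mratio_def l
    by (simp only: numeral_2_eq_2 prod.lessThan_Suc prod.empty lessThan_0) simp
qed

lemma mr8: "mratio [a,b,c,d,e,f,g,h] = (a-b)/(b-c) * ((c-d)/(d-e)) * ((e-f)/(f-g)) * ((g-h)/(h-a))"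
proof -
  have l: "length [a,b,c,d,e,f,g,h] = 8" "(8::nat) div 2 = 4" by simp_all
  have f: "(4::nat) = Suc (Suc (Suc (Suc 0)))" by simp
  show ?thesis unfolding mratio_def l f
    by (simp only: numeral_2_eq_2 prod.lessThan_Suc prod.empty lessThan_0) simp
qed

lemma fr4:
  fixes A :: "'a::field"
  assumes "B \<noteq> 0" "D \<noteq> 0" "F \<noteq> 0" "H \<noteq> 0"
  shows "(A/B*(C/D) = E/F*(G/H)) \<longleftrightarrow> (A*C*(F*H) - E*G*(B*D) = 0)"
  using assms by (simp add: field_simps)

lemma fr8:
  fixes A :: "'a::field"
  assumes "B \<noteq> 0" "D \<noteq> 0" "F \<noteq> 0" "H \<noteq> 0"
  shows "(A/B*(C/D)*(E/F)*(G/H) = 1) \<longleftrightarrow> (A*C*E*G - B*D*F*H = 0)"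
  using assms by (simp add: field_simps)

theorem lemma1:
  fixes phi :: "'a::field_char_0 \<Rightarrow> 'a hpt"
  assumes "conic_param phi"
  shows "(\<forall>x1 x2 x3 x4 y1 y2 y3 y4 A1 A2 A3.
            distinct [x1, x2, x3, x4, y1, y2, y3, y4] \<and>
            is_meet A1 (phi x1) (phi x2) (phi y1) (phi y2) \<and>
            is_meet A2 (phi x2) (phi x3) (phi y2) (phi y3) \<and>
            is_meet A3 (phi x3) (phi x4) (phi y3) (phi y4) \<longrightarrow>
            (proj_collinear A1 A2 A3 \<longleftrightarrow>
             mratio [x1, y2, x3, y4] = mratio [y1, x2, y3, x4]))
       \<and> (\<forall>y2 y1 u x1 x2 p v q A B C.
            distinct [y2, y1, u, x1, x2, p, v, q] \<and>
            is_meet A (phi x1) (phi x2) (phi y1) (phi y2) \<and>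
            is_meet B (phi u) (phi x1) (phi p) (phi v) \<and>
            is_meet C (phi u) (phi y1) (phi q) (phi v) \<longrightarrow>
            (proj_collinear A B C \<longleftrightarrow>
             mratio [p, u, q, x2, y1, v, x1, y2] = 1))"
proof -
  obtain c0 c1 c2 where dM: "det3 c0 c1 c2 \<noteq> 0" and phi: "phi = conic_pt c0 c1 c2"
    using assms unfolding conic_param_def by blast
  show ?thesis
  proof (intro conjI allI impI)
    fix x1 x2 x3 x4 y1 y2 y3 y4 A1 A2 A3
    assume H: "distinct [x1, x2, x3, x4, y1, y2, y3, y4] \<and>
            is_meet A1 (phi x1) (phi x2) (phi y1) (phi y2) \<and>
            is_meet A2 (phi x2) (phi x3) (phi y2) (phi y3) \<and>
            is_meet A3 (phi x3) (phi x4) (phi y3) (phi y4)"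
    have D: "distinct [x1, x2, x3, x4, y1, y2, y3, y4]" using H by blast
    hence d: "x1 \<noteq> x2" "x2 \<noteq> x3" "x3 \<noteq> x4" "y1 \<noteq> y2" "y2 \<noteq> y3" "y3 \<noteq> y4"
      "x1 \<noteq> y1" "x1 \<noteq> y2" "x2 \<noteq> y2" "x2 \<noteq> y3" "x3 \<noteq> y3" "x3 \<noteq> y4"
      "y2 - x3 \<noteq> 0" "y4 - x1 \<noteq> 0" "x2 - y3 \<noteq> 0" "x4 - y1 \<noteq> 0" "x2 - y2 \<noteq> 0" "x3 - y3 \<noteq> 0"
      by auto
    obtain k1 where k1: "k1 \<noteq> 0" "A1 = sc k1 (Mv c0 c1 c2 (ww x1 x2 y1 y2))"
      using meet[OF dM, of A1 x1 x2 y1 y2] H d unfolding phi by blast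
    obtain k2 where k2: "k2 \<noteq> 0" "A2 = sc k2 (Mv c0 c1 c2 (ww x2 x3 y2 y3))"
      using meet[OF dM, of A2 x2 x3 y2 y3] H d unfolding phi by blast
    obtain k3 where k3: "k3 \<noteq> 0" "A3 = sc k3 (Mv c0 c1 c2 (ww x3 x4 y3 y4))"
      using meet[OF dM, of A3 x3 x4 y3 y4] H d unfolding phi by blast
    have "det3 A1 A2 A3 = k1*k2*k3*(det3 c0 c1 c2 * det3 (ww x1 x2 y1 y2) (ww x2 x3 y2 y3) (ww x3 x4 y3 y4))"
      unfolding k1 k2 k3 det3_sc det3_Mv ..
    hence "proj_collinear A1 A2 A3 \<longleftrightarrow> det3 (ww x1 x2 y1 y2) (ww x2 x3 y2 y3) (ww x3 x4 y3 y4) = 0"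
      using k1 k2 k3 dM by (simp add: proj_collinear_def)
    also have "\<dots> \<longleftrightarrow> (x1-y2)*(x3-y4)*(x2-y3)*(x4-y1)-(y1-x2)*(y3-x4)*(y2-x3)*(y4-x1) = 0"
      unfolding D1 using d by simp
    also have "\<dots> \<longleftrightarrow> mratio [x1, y2, x3, y4] = mratio [y1, x2, y3, x4]"
      unfolding mr4 fr4[OF d(13-16)] by (simp add: algebra_simps)
    finally show "proj_collinear A1 A2 A3 \<longleftrightarrow> mratio [x1, y2, x3, y4] = mratio [y1, x2, y3, x4]" .
  next
    fix y2 y1 u x1 x2 p v q A B C
    assume H: "distinct [y2, y1, u, x1, x2, p, v, q] \<and>
            is_meet A (phi x1) (phi x2) (phi y1) (phi y2) \<and>
            is_meet B (phi u) (phi x1) (phi p) (phi v) \<and>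
            is_meet C (phi u) (phi y1) (phi q) (phi v)"
    have D: "distinct [y2, y1, u, x1, x2, p, v, q]" using H by blast
    hence d: "x1 \<noteq> x2" "y1 \<noteq> y2" "x1 \<noteq> y1" "x1 \<noteq> y2" "u \<noteq> x1" "p \<noteq> v" "u \<noteq> p" "u \<noteq> v"
      "u \<noteq> y1" "q \<noteq> v" "u \<noteq> q"
      "u - q \<noteq> 0" "x2 - y1 \<noteq> 0" "v - x1 \<noteq> 0" "y2 - p \<noteq> 0" "x1 - y1 \<noteq> 0" "u - v \<noteq> 0"
      by auto
    obtain k1 where k1: "k1 \<noteq> 0" "A = sc k1 (Mv c0 c1 c2 (ww x1 x2 y1 y2))"
      using meet[OF dM, of A x1 x2 y1 y2] H d unfolding phi by blast
    obtain k2 where k2: "k2 \<noteq> 0" "B = sc k2 (Mv c0 c1 c2 (ww u x1 p v))"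
      using meet[OF dM, of B u x1 p v] H d unfolding phi by blast
    obtain k3 where k3: "k3 \<noteq> 0" "C = sc k3 (Mv c0 c1 c2 (ww u y1 q v))"
      using meet[OF dM, of C u y1 q v] H d unfolding phi by blast
    have "det3 A B C = k1*k2*k3*(det3 c0 c1 c2 * det3 (ww x1 x2 y1 y2) (ww u x1 p v) (ww u y1 q v))"
      unfolding k1 k2 k3 det3_sc det3_Mv ..
    hence "proj_collinear A B C \<longleftrightarrow> det3 (ww x1 x2 y1 y2) (ww u x1 p v) (ww u y1 q v) = 0"
      using k1 k2 k3 dM by (simp add: proj_collinear_def)
    also have "\<dots> \<longleftrightarrow> (p-u)*(q-x2)*(y1-v)*(x1-y2)-(u-q)*(x2-y1)*(v-x1)*(y2-p) = 0"
      unfolding D2 using d by simp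
    also have "\<dots> \<longleftrightarrow> mratio [p, u, q, x2, y1, v, x1, y2] = 1"
      unfolding mr8 fr8[OF d(12-15)] by (simp add: algebra_simps)
    finally show "proj_collinear A B C \<longleftrightarrow> mratio [p, u, q, x2, y1, v, x1, y2] = 1" .
  qed
qed

end
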